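(* Let $d\ge 1$ and $\eta>0$. Consider two agents with opinions $\mathbf{X}_t^{(1)},\mathbf{X}_t^{(2)}\in\mathbb{S}^{d-1}$ following the HJMR dynamics $\mathbf{X}_{t+1}^{(i)}=P_{\mathbb{S}^{d-1}}\big(\mathbf{X}_t^{(i)}+\eta\langle\mathbf{X}_t^{(i)},\xi_t\rangle\xi_t\big)$, $i=1,2$, where $\xi_0,\xi_1,\ldots$ are i.i.d. uniform on the standard basis $\{\mathbf{e}_1,\ldots,\mathbf{e}_d\}$. Let $\mathbf{X}_0=(\mathbf{X}_0^{(1)},\mathbf{X}_0^{(2)})$ be such that $\mathbf{X}_0^{(1)}$ and $\mathbf{X}_0^{(2)}$ have the same support (the same set of nonzero coordinates) but $\mathbf{X}_0^{(1)}\neq\pm\mathbf{X}_0^{(2)}$. Then: (1) $\mathbf{X}_t$ weakly polarizes: for every $\epsilon>0$, $\Pr(\rho(\mathbf{X}_t,P)\ge\epsilon)\to 0$ as $t\to\infty$. (2) With probability $1$, $\|\mathbf{X}_t^{(1)}-\mathbf{X}_t^{(2)}\|_2$ converges neither to $0$ nor to $2$; in particular $\mathbf{X}_t$ does not strongly polarize with positive probability.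
   Context: $\mathbb{S}^{d-1}$ is the unit sphere in $\mathbb{R}^d$, $P_{\mathbb{S}^{d-1}}(\mathbf{x})=\mathbf{x}/\|\mathbf{x}\|_2$. The polarized set (for two agents) is $P=\{(\mathbf{x},\sigma\mathbf{x}):\mathbf{x}\in\mathbb{S}^{d-1},\sigma\in\{-1,1\}\}$ and $\rho(\mathbf{z},P)=\inf_{\mathbf{y}\in P}\|\mathbf{z}-\mathbf{y}\|_2$. Strong polarization means $\rho(\mathbf{X}_t,P)\to0$ almost surely. *)

theory Defs
  imports "HOL-Probability.Probability"
begin

definition sphere_proj :: "real ^ 'd \<Rightarrow> real ^ 'd" where
  "sphere_proj x = (1 / norm x) *\<^sub>R x"

definition hjmr_step :: "real \<Rightarrow> 'd::finite \<Rightarrow> real ^ 'd \<Rightarrow> real ^ 'd" where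
  "hjmr_step \<eta> k x = sphere_proj (x + (\<eta> * (x \<bullet> axis k 1)) *\<^sub>R axis k 1)"

primrec hjmr_traj :: "real \<Rightarrow> ('a \<Rightarrow> nat \<Rightarrow> 'd::finite) \<Rightarrow> real ^ 'd \<Rightarrow> 'a \<Rightarrow> nat \<Rightarrow> real ^ 'd" where
  "hjmr_traj \<eta> \<xi> x0 \<omega> 0 = x0"
| "hjmr_traj \<eta> \<xi> x0 \<omega> (Suc t) = hjmr_step \<eta> (\<xi> \<omega> t) (hjmr_traj \<eta> \<xi> x0 \<omega> t)"

text \<open>The polarized set P = {(x, sigma x) : x in S^(d-1), sigma in {-1,1}} in R^d x R^d
  (the product norm is the Euclidean norm of R^(2d)).\<close>
definition polarized_set :: "((real ^ 'd) \<times> (real ^ 'd)) set" where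
  "polarized_set = {(x, \<sigma> *\<^sub>R x) | x \<sigma>. norm x = 1 \<and> (\<sigma> = -1 \<or> \<sigma> = 1)}"

definition rho_P :: "(real ^ 'd) \<times> (real ^ 'd) \<Rightarrow> real" where
  "rho_P z = infdist z polarized_set"

definition support :: "real ^ 'd \<Rightarrow> 'd set" where
  "support x = {i. x $ i \<noteq> 0}"

end

theory Submission
  imports Defs
begin


definition cnt :: "(nat \<Rightarrow> 'a \<Rightarrow> 'd) \<Rightarrow> 'a \<Rightarrow> 'd \<Rightarrow> nat \<Rightarrow> nat" where
  "cnt \<xi> \<omega> j t = card {s. s < t \<and> \<xi> s \<omega> = j}"

lemma cnt_0[simp]: "cnt \<xi> \<omega> j 0 = 0"
  by (simp add: cnt_def)

lemma cnt_Suc: "cnt \<xi> \<omega> j (Suc t) = cnt \<xi> \<omega> j t + (if \<xi> t \<omega> = j then 1 else 0)"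
proof -
  have "{s. s < Suc t \<and> \<xi> s \<omega> = j} = {s. s < t \<and> \<xi> s \<omega> = j} \<union> (if \<xi> t \<omega> = j then {t} else {})"
    by (auto simp: less_Suc_eq)
  then show ?thesis by (simp add: cnt_def)
qed

definition wvec :: "real \<Rightarrow> real ^ 'd \<Rightarrow> ('d \<Rightarrow> nat) \<Rightarrow> real ^ 'd" where
  "wvec q x n = (\<chi> j. q ^ n j * x $ j)"

lemma sphere_proj_scale: "c > 0 \<Longrightarrow> sphere_proj (c *\<^sub>R v) = sphere_proj v"
  by (simp add: sphere_proj_def)

lemma norm_sphere_proj: "v \<noteq> 0 \<Longrightarrow> norm (sphere_proj v) = 1"
  by (simp add: sphere_proj_def)

lemma wvec_nonzero: "q > 0 \<Longrightarrow> x \<noteq> 0 \<Longrightarrow> wvec q x n \<noteq> 0"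
proof
  assume "q > 0" "x \<noteq> 0" "wvec q x n = 0"
  then obtain j where "x $ j \<noteq> 0" by (metis vec_eq_iff zero_index)
  moreover have "wvec q x n $ j = q ^ n j * x $ j" by (simp add: wvec_def)
  ultimately show False using \<open>q > 0\<close> \<open>wvec q x n = 0\<close> by simp
qed

lemma traj_formula:
  assumes "\<eta> > 0" "norm x = 1"
  shows "hjmr_traj \<eta> (\<lambda>\<omega> t. \<xi> t \<omega>) x \<omega> t = sphere_proj (wvec (1+\<eta>) x (\<lambda>j. cnt \<xi> \<omega> j t))"
proof (induction t)
  case 0
  have "wvec (1+\<eta>) x (\<lambda>j. cnt \<xi> \<omega> j 0) = x" by (simp add: wvec_def vec_eq_iff)
  moreover have "sphere_proj x = x" using assms by (simp add: sphere_proj_def)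
  ultimately show ?case by simp
next
  case (Suc t)
  define v where "v = wvec (1+\<eta>) x (\<lambda>j. cnt \<xi> \<omega> j t)"
  define k where "k = \<xi> t \<omega>"
  have "x \<noteq> 0" using assms by auto
  have v0: "v \<noteq> 0" unfolding v_def using assms \<open>x \<noteq> 0\<close> by (intro wvec_nonzero) auto
  have nv: "norm v > 0" using v0 by simp
  have "sphere_proj v + (\<eta> * (sphere_proj v \<bullet> axis k 1)) *\<^sub>R axis k 1
        = (1 / norm v) *\<^sub>R (v + (\<eta> * (v \<bullet> axis k 1)) *\<^sub>R axis k 1)"
    by (simp add: sphere_proj_def algebra_simps)
  moreover have "v \<bullet> axis k 1 = v $ k" by (simp add: inner_axis)
  moreover have "v + (\<eta> * (v $ k)) *\<^sub>R axis k 1 = wvec (1+\<eta>) x (\<lambda>j. cnt \<xi> \<omega> j (Suc t))"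
    by (simp add: v_def k_def wvec_def vec_eq_iff cnt_Suc axis_def algebra_simps)
  ultimately show ?case using Suc nv
    by (simp add: hjmr_step_def sphere_proj_scale v_def k_def)
qed


lemma normalize_diff:
  fixes a b :: "'v::real_normed_vector"
  assumes "a \<noteq> 0" "b \<noteq> 0"
  shows "norm ((1/norm a) *\<^sub>R a - (1/norm b) *\<^sub>R b) \<le> 2 * norm (a - b) / norm a"
proof -
  have na: "norm a > 0" and nb: "norm b > 0" using assms by auto
  have eq: "(1/norm a) *\<^sub>R a - (1/norm b) *\<^sub>R b = (1/norm a) *\<^sub>R (a - b) + (1/norm a - 1/norm b) *\<^sub>R b"
    by (simp add: algebra_simps)
  have "norm ((1/norm a) *\<^sub>R a - (1/norm b) *\<^sub>R b) \<le> norm ((1/norm a) *\<^sub>R (a - b)) + norm ((1/norm a - 1/norm b) *\<^sub>R b)"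
    unfolding eq by (rule norm_triangle_ineq)
  also have "norm ((1/norm a) *\<^sub>R (a - b)) = norm (a - b) / norm a" using na by simp
  also have "norm ((1/norm a - 1/norm b) *\<^sub>R b) = \<bar>1/norm a - 1/norm b\<bar> * norm b" by simp
  also have "\<bar>1/norm a - 1/norm b\<bar> * norm b = \<bar>norm b - norm a\<bar> / norm a"
  proof -
    have "1/norm a - 1/norm b = (norm b - norm a) / (norm a * norm b)" using na nb by (simp add: field_simps)
    then show ?thesis using na nb by (simp add: abs_divide)
  qed
  also have "\<bar>norm b - norm a\<bar> \<le> norm (a - b)"
    using norm_triangle_ineq3[of b a] by (simp add: norm_minus_commute)
  then have "\<bar>norm b - norm a\<bar> / norm a \<le> norm (a - b) / norm a" using na by (simp add: divide_right_mono)
  finally show ?thesis by simp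
qed
lemma wvec_comp: "wvec q x n $ j = q ^ n j * x $ j"
  by (simp add: wvec_def)

lemma concentrate:
  fixes x :: "real ^ 'd" and n :: "'d \<Rightarrow> nat"
  assumes q: "q \<ge> 1" and nx: "norm x = 1" and m: "m > 0" "m \<le> \<bar>x $ k\<bar>"
    and gap: "\<And>j. j \<noteq> k \<Longrightarrow> x $ j \<noteq> 0 \<Longrightarrow> n j + K + 1 \<le> n k"
  shows "norm (sphere_proj (wvec q x n) - sgn (x $ k) *\<^sub>R axis k 1) \<le> 2 * real CARD('d) / (m * q ^ (K+1))"
proof -
  define v where "v = wvec q x n"
  define b where "b = (v $ k) *\<^sub>R (axis k 1 :: real ^ 'd)"
  have xk: "x $ k \<noteq> 0" using m by auto
  have qp: "q > 0" using q by simp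
  have vk: "v $ k = q ^ n k * x $ k" by (simp add: v_def wvec_comp)
  have vk0: "v $ k \<noteq> 0" using vk xk qp by simp
  have v0: "v \<noteq> 0" using vk0 by auto
  have b0: "b \<noteq> 0" using vk0 by (simp add: b_def)
  have nb: "norm b = \<bar>v $ k\<bar>" by (simp add: b_def)
  have bnorm: "(1 / norm b) *\<^sub>R b = sgn (x $ k) *\<^sub>R axis k 1"
    using qp xk by (simp add: nb b_def vk abs_mult sgn_mult sgn_div_norm[symmetric]) (auto simp: sgn_if)
  have "norm (sphere_proj v - sgn (x $ k) *\<^sub>R axis k 1) \<le> 2 * norm (v - b) / norm v"
    using normalize_diff[OF v0 b0] by (simp add: sphere_proj_def bnorm)
  also have "norm (v - b) \<le> real CARD('d) * (q ^ n k / q ^ (K+1))"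
  proof -
    have "norm (v - b) \<le> (\<Sum>i\<in>UNIV. \<bar>(v - b) $ i\<bar>)" by (rule norm_le_l1_cart)
    also have "\<dots> \<le> (\<Sum>i\<in>(UNIV::'d set). q ^ n k / q ^ (K+1))"
    proof (rule sum_mono)
      fix i :: 'd
      show "\<bar>(v - b) $ i\<bar> \<le> q ^ n k / q ^ (K+1)"
      proof (cases "i = k \<or> x $ i = 0")
        case True
        then show ?thesis using qp by (auto simp: b_def v_def wvec_comp axis_def)
      next
        case False
        then have g: "n i + (K + 1) \<le> n k" using gap by auto
        have "\<bar>(v - b) $ i\<bar> = q ^ n i * \<bar>x $ i\<bar>" using False qp
          by (simp add: b_def v_def wvec_comp axis_def abs_mult)
        also have "\<dots> \<le> q ^ n i * 1"
          using component_le_norm_cart[of x i] nx qp by (intro mult_left_mono) auto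
        also have "q ^ n i = q ^ (n i + (K+1)) / q ^ (K+1)" using qp by (simp add: power_add)
        also have "\<dots> \<le> q ^ n k / q ^ (K+1)"
          using g q qp by (intro divide_right_mono power_increasing) auto
        finally show ?thesis by simp
      qed
    qed
    finally show ?thesis by simp
  qed
  then have "2 * norm (v - b) / norm v \<le> 2 * (real CARD('d) * (q ^ n k / q ^ (K+1))) / norm v"
    using v0 by (intro divide_right_mono) auto
  also have "\<dots> \<le> 2 * (real CARD('d) * (q ^ n k / q ^ (K+1))) / (q ^ n k * m)"
  proof (rule divide_left_mono)
    have "q ^ n k * m \<le> \<bar>v $ k\<bar>" using vk m qp by (simp add: abs_mult mult_left_mono)
    also have "\<dots> \<le> norm v" by (rule component_le_norm_cart)
    finally show "q ^ n k * m \<le> norm v" .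
  qed (use qp m v0 in auto)
  also have "\<dots> = 2 * real CARD('d) / (m * q ^ (K+1))" using qp m by (simp add: field_simps)
  finally show ?thesis by (simp add: v_def)
qed

lemma polarized_mem: "norm x = 1 \<Longrightarrow> (\<sigma> = -1 \<or> \<sigma> = 1) \<Longrightarrow> (x, \<sigma> *\<^sub>R x) \<in> polarized_set"
  unfolding polarized_set_def by blast

lemma rho_le:
  assumes "norm x = 1" "\<sigma> = -1 \<or> \<sigma> = 1"
  shows "rho_P (x, y) \<le> norm (y - \<sigma> *\<^sub>R x)"
proof -
  have "rho_P (x, y) \<le> dist (x, y) (x, \<sigma> *\<^sub>R x)"
    unfolding rho_P_def by (rule infdist_le[OF polarized_mem[OF assms]])
  also have "\<dots> = norm (y - \<sigma> *\<^sub>R x)" by (simp add: dist_norm norm_Pair)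
  finally show ?thesis .
qed

lemma minor_le_rho:
  fixes x y :: "real ^ 'd"
  assumes "norm x = 1" "norm y = 1"
  shows "\<bar>x $ j * y $ k - x $ k * y $ j\<bar> \<le> 4 * rho_P (x, y)"
proof (rule field_le_epsilon)
  fix e :: real assume e: "e > 0"
  have ne: "polarized_set \<noteq> ({} :: ((real^'d) \<times> (real^'d)) set)"
    using polarized_mem[of "axis j 1 :: real^'d" 1] by auto
  have "Inf (dist (x, y) ` polarized_set) < rho_P (x, y) + e/4"
    using e ne by (simp add: rho_P_def infdist_notempty)
  then obtain p where p: "p \<in> polarized_set" "dist (x, y) p < rho_P (x, y) + e/4"
    using cInf_lessD[of "dist (x, y) ` polarized_set" "rho_P (x, y) + e/4"] ne by auto
  then obtain z \<sigma> where pz: "p = (z, \<sigma> *\<^sub>R z)" "\<sigma> = -1 \<or> \<sigma> = 1"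
    unfolding polarized_set_def by blast
  have s1: "\<bar>\<sigma>\<bar> = 1" using pz by auto
  have d1: "norm (x - z) \<le> dist (x, y) p" using pz norm_fst_le[of "x - z" "y - \<sigma> *\<^sub>R z"]
    by (simp add: dist_norm)
  have d2: "norm (y - \<sigma> *\<^sub>R z) \<le> dist (x, y) p" using pz norm_snd_le[of "y - \<sigma> *\<^sub>R z" "x - z"]
    by (simp add: dist_norm)
  have eq: "y - \<sigma> *\<^sub>R x = (y - \<sigma> *\<^sub>R z) + \<sigma> *\<^sub>R (z - x)" by (simp add: algebra_simps)
  have "norm (y - \<sigma> *\<^sub>R x) \<le> norm (y - \<sigma> *\<^sub>R z) + norm (\<sigma> *\<^sub>R (z - x))"
    unfolding eq by (rule norm_triangle_ineq)
  also have "norm (\<sigma> *\<^sub>R (z - x)) = norm (x - z)" using s1 by (simp add: norm_minus_commute)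
  finally have yd: "norm (y - \<sigma> *\<^sub>R x) \<le> 2 * dist (x, y) p" using d1 d2 by simp
  define w where "w = y - \<sigma> *\<^sub>R x"
  have "x $ j * y $ k - x $ k * y $ j = x $ j * w $ k - x $ k * w $ j"
    by (simp add: w_def algebra_simps)
  also have "\<bar>\<dots>\<bar> \<le> \<bar>x $ j\<bar> * \<bar>w $ k\<bar> + \<bar>x $ k\<bar> * \<bar>w $ j\<bar>"
    using abs_triangle_ineq4[of "x $ j * w $ k" "x $ k * w $ j"] by (simp add: abs_mult)
  also have "\<dots> \<le> 1 * norm w + 1 * norm w"
    using component_le_norm_cart[of x j] component_le_norm_cart[of x k]
      component_le_norm_cart[of w j] component_le_norm_cart[of w k] assms
    by (intro add_mono mult_mono) auto
  also have "\<dots> \<le> 4 * (rho_P (x, y) + e/4)" using yd p(2) by (simp add: w_def)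
  finally show "\<bar>x $ j * y $ k - x $ k * y $ j\<bar> \<le> 4 * rho_P (x, y) + e" using e by simp
qed



lemma minor_formula:
  assumes "wvec q x1 n \<noteq> 0" "wvec q x2 n \<noteq> 0"
  shows "sphere_proj (wvec q x1 n) $ j * sphere_proj (wvec q x2 n) $ k
       - sphere_proj (wvec q x1 n) $ k * sphere_proj (wvec q x2 n) $ j
       = q ^ (n j + n k) * (x1 $ j * x2 $ k - x1 $ k * x2 $ j) / (norm (wvec q x1 n) * norm (wvec q x2 n))"
  using assms by (simp add: sphere_proj_def wvec_comp power_add field_simps)

lemma wvec_norm_le:
  fixes x :: "real ^ 'd"
  assumes "q \<ge> 1" "norm x = 1" "\<And>j. x $ j \<noteq> 0 \<Longrightarrow> n j \<le> M"
  shows "norm (wvec q x n) \<le> q ^ M"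
proof -
  have "norm (wvec q x n) \<le> norm (q ^ M *\<^sub>R x)"
  proof (rule norm_le_componentwise_cart)
    fix i
    show "norm (wvec q x n $ i) \<le> norm ((q ^ M *\<^sub>R x) $ i)"
    proof (cases "x $ i = 0")
      case False
      then have "q ^ n i \<le> q ^ M" using assms by (intro power_increasing) auto
      then show ?thesis using assms by (simp add: wvec_comp abs_mult mult_right_mono)
    qed (simp add: wvec_comp)
  qed
  also have "\<dots> = q ^ M" using assms by simp
  finally show ?thesis .
qed

lemma ratio_nonconst:
  fixes x1 x2 :: "real ^ 'd"
  assumes n1: "norm x1 = 1" and n2: "norm x2 = 1"
    and supp: "\<And>j. (x1 $ j = 0) = (x2 $ j = 0)"
    and ne1: "x1 \<noteq> x2" and ne2: "x1 \<noteq> - x2"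
  shows "\<exists>a b. x1 $ a \<noteq> 0 \<and> x1 $ b \<noteq> 0 \<and> x2 $ a / x1 $ a \<noteq> x2 $ b / x1 $ b"
proof (rule ccontr)
  assume na: "\<not> ?thesis"
  have x10: "x1 \<noteq> 0" using n1 by auto
  then obtain i0 where i0: "x1 $ i0 \<noteq> 0" by (metis vec_eq_iff zero_index)
  define c where "c = x2 $ i0 / x1 $ i0"
  have comp: "x2 $ j = c * x1 $ j" for j
  proof (cases "x1 $ j = 0")
    case True
    then show ?thesis using supp[of j] by simp
  next
    case False
    then have "x2 $ j / x1 $ j = c" using na i0 unfolding c_def by blast
    then show ?thesis using False by (simp add: divide_eq_eq)
  qed
  have eq: "x2 = c *\<^sub>R x1" by (simp add: vec_eq_iff comp)
  then have "norm x2 = \<bar>c\<bar> * norm x1" by simp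
  then have "\<bar>c\<bar> = 1" using n1 n2 by simp
  then have "c = 1 \<or> c = -1" by linarith
  then show False
  proof
    assume "c = 1" then show False using eq ne1 by simp
  next
    assume "c = -1" then have "x2 = - x1" using eq by simp
    then show False using ne2 by simp
  qed
qed

lemma core:
  fixes n :: "nat \<Rightarrow> 'd::finite \<Rightarrow> nat" and x1 x2 :: "real ^ 'd"
  assumes q: "q > 1" and n1: "norm x1 = 1" and n2: "norm x2 = 1"
    and supp: "\<And>j. (x1 $ j = 0) = (x2 $ j = 0)"
    and ne1: "x1 \<noteq> x2" and ne2: "x1 \<noteq> - x2"
    and mono: "\<And>t j. n t j \<le> n (Suc t) j" "\<And>t j. n (Suc t) j \<le> n t j + 1"
    and lim: "\<And>j k. (\<lambda>t. sphere_proj (wvec q x1 (n t)) $ j * sphere_proj (wvec q x2 (n t)) $ k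
       - sphere_proj (wvec q x1 (n t)) $ k * sphere_proj (wvec q x2 (n t)) $ j) \<longlonglongrightarrow> 0"
  shows "\<exists>A B. B \<noteq> {} \<and> (\<forall>L. \<exists>T. \<forall>t\<ge>T. \<forall>k\<in>B. \<exists>a\<in>A. n t k + L \<le> n t a)"
proof -
  define S where "S = {j. x1 $ j \<noteq> 0}"
  define r where "r j = x2 $ j / x1 $ j" for j
  have finS: "finite S" by simp
  have x10: "x1 \<noteq> 0" using n1 by auto
  then obtain j0 where "x1 $ j0 \<noteq> 0" by (metis vec_eq_iff zero_index)
  then have Sne: "S \<noteq> {}" unfolding S_def by auto
  have qp: "q > 0" using q by simp
  have Delta: "x1 $ j * x2 $ k - x1 $ k * x2 $ j \<noteq> 0" if "j \<in> S" "k \<in> S" "r j \<noteq> r k" for j k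
  proof
    assume "x1 $ j * x2 $ k - x1 $ k * x2 $ j = 0"
    moreover have "x1 $ j \<noteq> 0" "x1 $ k \<noteq> 0" using that by (auto simp: S_def)
    ultimately have "x2 $ k / x1 $ k = x2 $ j / x1 $ j" by (simp add: divide_eq_eq field_simps)
    then show False using that by (simp add: r_def)
  qed
  have nonconst: "\<exists>a\<in>S. \<exists>b\<in>S. r a \<noteq> r b"
    using ratio_nonconst[OF n1 n2 supp ne1 ne2] unfolding S_def r_def by blast
  define M where "M t = Max (n t ` S)" for t
  have leM: "n t j \<le> M t" if "j \<in> S" for t j using that finS by (simp add: M_def)
  have argmax: "\<exists>a\<in>S. n t a = M t" for t
  proof -
    have "Max (n t ` S) \<in> n t ` S" using finS Sne by (intro Max_in) auto
    then show ?thesis by (auto simp: M_def)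
  qed
  have v0: "wvec q x n \<noteq> 0" if "norm x = 1" for x :: "real^'d" and n
    using that qp by (intro wvec_nonzero) auto
  have key: "\<forall>\<^sub>F t in sequentially. \<forall>j\<in>S. \<forall>k\<in>S. r j \<noteq> r k \<longrightarrow> n t j + n t k + L < 2 * M t" for L
  proof -
    have "\<forall>\<^sub>F t in sequentially. n t j + n t k + L < 2 * M t" if jk: "j \<in> S" "k \<in> S" "r j \<noteq> r k" for j k
    proof -
      define D where "D = x1 $ j * x2 $ k - x1 $ k * x2 $ j"
      have D0: "\<bar>D\<bar> > 0" using Delta[OF jk] by (simp add: D_def)
      have "\<forall>\<^sub>F t in sequentially. \<bar>sphere_proj (wvec q x1 (n t)) $ j * sphere_proj (wvec q x2 (n t)) $ k
       - sphere_proj (wvec q x1 (n t)) $ k * sphere_proj (wvec q x2 (n t)) $ j\<bar> < \<bar>D\<bar> / q ^ L"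
        using lim[of j k] D0 qp by (auto simp: tendsto_iff dist_real_def)
      then show ?thesis
      proof (rule eventually_mono)
        fix t
        let ?v1 = "wvec q x1 (n t)" and ?v2 = "wvec q x2 (n t)"
        assume a: "\<bar>sphere_proj ?v1 $ j * sphere_proj ?v2 $ k - sphere_proj ?v1 $ k * sphere_proj ?v2 $ j\<bar> < \<bar>D\<bar> / q ^ L"
        have p1: "norm ?v1 > 0" and p2: "norm ?v2 > 0" using v0 n1 n2 by auto
        have b1: "norm ?v1 \<le> q ^ M t"
          using q n1 leM by (intro wvec_norm_le) (auto simp: S_def)
        have b2: "norm ?v2 \<le> q ^ M t"
          using q n2 leM supp by (intro wvec_norm_le) (auto simp: S_def)
        have "q ^ (n t j + n t k) * \<bar>D\<bar> / (q ^ M t * q ^ M t) \<le> q ^ (n t j + n t k) * \<bar>D\<bar> / (norm ?v1 * norm ?v2)"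
          using p1 p2 b1 b2 qp by (intro divide_left_mono mult_mono) auto
        also have "\<dots> = \<bar>sphere_proj ?v1 $ j * sphere_proj ?v2 $ k - sphere_proj ?v1 $ k * sphere_proj ?v2 $ j\<bar>"
          using minor_formula[OF v0[OF n1, of "n t"] v0[OF n2, of "n t"], of j k] p1 p2 qp
          by (simp add: D_def abs_mult abs_divide)
        also have "\<dots> < \<bar>D\<bar> / q ^ L" by (rule a)
        finally have "q ^ (n t j + n t k) * \<bar>D\<bar> / (q ^ M t * q ^ M t) < \<bar>D\<bar> / q ^ L" .
        moreover have "q ^ M t * q ^ M t > 0" "q ^ L > 0" using qp by auto
        ultimately have "q ^ (n t j + n t k) * \<bar>D\<bar> / (q ^ M t * q ^ M t) * ((q ^ M t * q ^ M t) * q ^ L)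
             < \<bar>D\<bar> / q ^ L * ((q ^ M t * q ^ M t) * q ^ L)"
          by (intro mult_strict_right_mono) auto
        then have "(q ^ (n t j + n t k) * q ^ L) * \<bar>D\<bar> < (q ^ M t * q ^ M t) * \<bar>D\<bar>"
          using qp by (simp add: field_simps)
        then have "q ^ (n t j + n t k) * q ^ L < q ^ M t * q ^ M t"
          using D0 by (simp only: mult_less_cancel_right_pos)
        then have "q ^ (n t j + n t k + L) < q ^ (2 * M t)"
          by (simp add: power_add mult_2 )
        then show "n t j + n t k + L < 2 * M t"
          by (rule power_less_imp_less_exp[OF q])
      qed
    qed
    then have "\<forall>j\<in>S. \<forall>\<^sub>F t in sequentially. \<forall>k\<in>S. r j \<noteq> r k \<longrightarrow> n t j + n t k + L < 2 * M t"
      using finS by (auto intro!: eventually_ball_finite)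
    then show ?thesis using finS by (rule eventually_ball_finite[rotated])
  qed
  obtain T0 where T0: "\<And>t. t \<ge> T0 \<Longrightarrow> \<forall>j\<in>S. \<forall>k\<in>S. r j \<noteq> r k \<longrightarrow> n t j + n t k + 3 < 2 * M t"
    using key[of 3] unfolding eventually_sequentially by blast
  obtain a0 where a0: "a0 \<in> S" "n T0 a0 = M T0" using argmax by blast
  define C where "C = {j\<in>S. r j = r a0}"
  define B where "B = S - C"
  have Bne: "B \<noteq> {}"
  proof
    assume "B = {}"
    then have "\<And>j. j \<in> S \<Longrightarrow> r j = r a0" by (auto simp: B_def C_def)
    then show False using nonconst by metis
  qed
  have inC: "\<exists>a\<in>C. n t a = M t" if "t \<ge> T0" for t
    using that
  proof (induction t rule: dec_induct)
    case base
    then show ?case using a0 by (auto simp: C_def)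
  next
    case (step t)
    then obtain a where a: "a \<in> C" "n t a = M t" by blast
    obtain a' where a': "a' \<in> S" "n (Suc t) a' = M (Suc t)" using argmax by blast
    have aS: "a \<in> S" using a by (simp add: C_def)
    have "M (Suc t) \<le> M t + 1"
      using a' mono(2)[of t a'] leM[of a' t] by simp
    moreover have "M t \<le> n (Suc t) a" using a mono(1)[of t a] by simp
    ultimately have "\<not> (n (Suc t) a + n (Suc t) a' + 3 < 2 * M (Suc t))" using a' by simp
    moreover have "T0 \<le> Suc t" using step(1) by simp
    ultimately have "r a = r a'" using T0[of "Suc t"] aS a'(1) by blast
    then have "a' \<in> C" using a a' by (simp add: C_def)
    then show ?case using a' by blast
  qed
  have "\<forall>L. \<exists>T. \<forall>t\<ge>T. \<forall>k\<in>B. \<exists>a\<in>C. n t k + L \<le> n t a"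
  proof
    fix L
    obtain T1 where T1: "\<And>t. t \<ge> T1 \<Longrightarrow> \<forall>j\<in>S. \<forall>k\<in>S. r j \<noteq> r k \<longrightarrow> n t j + n t k + L < 2 * M t"
      using key[of L] unfolding eventually_sequentially by blast
    have "\<forall>k\<in>B. \<exists>a\<in>C. n t k + L \<le> n t a" if t: "t \<ge> max T0 T1" for t
    proof
      fix k assume k: "k \<in> B"
      obtain a where a: "a \<in> C" "n t a = M t" using inC[of t] t by auto
      have "r a \<noteq> r k" using a k by (auto simp: B_def C_def)
      then have "n t a + n t k + L < 2 * M t" using T1[of t] t a k by (auto simp: B_def C_def)
      then have "n t k + L \<le> n t a" using a by simp
      then show "\<exists>a\<in>C. n t k + L \<le> n t a" using a(1) by blast
    qed
    then show "\<exists>T. \<forall>t\<ge>T. \<forall>k\<in>B. \<exists>a\<in>C. n t k + L \<le> n t a" by blast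
  qed
  then show ?thesis using Bne by blast
qed



lemma cnt_sum: "cnt \<xi> \<omega> j t = (\<Sum>s<t. if \<xi> s \<omega> = j then 1::real else 0)"
  by (induction t) (simp_all add: cnt_Suc)

definition EvP :: "(nat \<Rightarrow> 'a \<Rightarrow> 'd) \<Rightarrow> 'd set \<Rightarrow> 'd set \<Rightarrow> 'a \<Rightarrow> bool" where
  "EvP \<xi> A B \<omega> = (\<forall>L. \<exists>T. \<forall>t\<ge>T. \<forall>k\<in>B. \<exists>a\<in>A. cnt \<xi> \<omega> k t + L \<le> cnt \<xi> \<omega> a t)"

lemma cnt_real_meas:
  assumes "\<And>s. \<xi> s \<in> N \<rightarrow>\<^sub>M count_space UNIV"
  shows "(\<lambda>\<omega>. real (cnt \<xi> \<omega> j t)) \<in> borel_measurable N"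
proof -
  have "(\<lambda>\<omega>. real (cnt \<xi> \<omega> j t)) = (\<lambda>\<omega>. \<Sum>s<t. if \<xi> s \<omega> = j then 1::real else 0)"
    by (simp add: cnt_sum of_nat_sum if_distrib)
  also have "\<dots> \<in> borel_measurable N"
    using assms by measurable
  finally show ?thesis .
qed

lemma cnt_le_pred:
  assumes "\<And>s. \<xi> s \<in> N \<rightarrow>\<^sub>M count_space UNIV"
  shows "Measurable.pred N (\<lambda>\<omega>. cnt \<xi> \<omega> k t + L \<le> cnt \<xi> \<omega> a t)"
proof -
  have "(\<lambda>\<omega>. cnt \<xi> \<omega> k t + L \<le> cnt \<xi> \<omega> a t) = (\<lambda>\<omega>. real (cnt \<xi> \<omega> k t) + real L \<le> real (cnt \<xi> \<omega> a t))"
    by (intro ext) linarith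
  also have "Measurable.pred N \<dots>"
    using cnt_real_meas[OF assms, where j=k and t=t] cnt_real_meas[OF assms, where j=a and t=t] by measurable
  finally show ?thesis .
qed

lemma EvP_pred:
  fixes \<xi> :: "nat \<Rightarrow> 'a \<Rightarrow> 'd::finite"
  assumes "\<And>s. \<xi> s \<in> N \<rightarrow>\<^sub>M count_space UNIV"
  shows "Measurable.pred N (EvP \<xi> A B)"
  unfolding EvP_def
  using cnt_le_pred[OF assms] by measurable



lemma cnt_shift: "cnt \<xi> \<omega> j (n + t) = cnt \<xi> \<omega> j n + cnt (\<lambda>s. \<xi> (n + s)) \<omega> j t"
  by (induction t) (simp_all add: cnt_Suc)

lemma cnt_le: "cnt \<xi> \<omega> j n \<le> n"
proof -
  have "{s. s < n \<and> \<xi> s \<omega> = j} \<subseteq> {..<n}" by auto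
  then have "card {s. s < n \<and> \<xi> s \<omega> = j} \<le> card {..<n}" by (intro card_mono) auto
  then show ?thesis by (simp add: cnt_def)
qed

lemma shift_equiv:
  fixes f g :: "'d \<Rightarrow> nat \<Rightarrow> nat"
  assumes fg: "\<And>j t. f j (n + t) = c j + g j t" and cb: "\<And>j. c j \<le> n"
  shows "(\<forall>L. \<exists>T. \<forall>t\<ge>T. \<forall>k\<in>B. \<exists>a\<in>A. f k t + L \<le> f a t) \<longleftrightarrow>
         (\<forall>L. \<exists>T. \<forall>t\<ge>T. \<forall>k\<in>B. \<exists>a\<in>A. g k t + L \<le> g a t)"
proof
  assume H: "\<forall>L. \<exists>T. \<forall>t\<ge>T. \<forall>k\<in>B. \<exists>a\<in>A. f k t + L \<le> f a t"
  show "\<forall>L. \<exists>T. \<forall>t\<ge>T. \<forall>k\<in>B. \<exists>a\<in>A. g k t + L \<le> g a t"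
  proof
    fix L
    obtain T where T: "\<And>t. t \<ge> T \<Longrightarrow> \<forall>k\<in>B. \<exists>a\<in>A. f k t + (L + n) \<le> f a t" using H by blast
    have "\<forall>k\<in>B. \<exists>a\<in>A. g k t + L \<le> g a t" if tT: "t \<ge> T" for t
    proof
      fix k assume k: "k \<in> B"
      obtain a where a: "a \<in> A" "f k (n + t) + (L + n) \<le> f a (n + t)" using T[of "n + t"] tT k by auto
      then have "g k t + L \<le> g a t" using fg[of k t] fg[of a t] cb[of a] by simp
      then show "\<exists>a\<in>A. g k t + L \<le> g a t" using a(1) by blast
    qed
    then show "\<exists>T. \<forall>t\<ge>T. \<forall>k\<in>B. \<exists>a\<in>A. g k t + L \<le> g a t" by blast
  qed
next
  assume H: "\<forall>L. \<exists>T. \<forall>t\<ge>T. \<forall>k\<in>B. \<exists>a\<in>A. g k t + L \<le> g a t"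
  show "\<forall>L. \<exists>T. \<forall>t\<ge>T. \<forall>k\<in>B. \<exists>a\<in>A. f k t + L \<le> f a t"
  proof
    fix L
    obtain T where T: "\<And>t. t \<ge> T \<Longrightarrow> \<forall>k\<in>B. \<exists>a\<in>A. g k t + (L + n) \<le> g a t" using H by blast
    have "\<forall>k\<in>B. \<exists>a\<in>A. f k t + L \<le> f a t" if tT: "t \<ge> T + n" for t
    proof
      fix k assume k: "k \<in> B"
      define t' where "t' = t - n"
      have t': "t = n + t'" "t' \<ge> T" using tT by (auto simp: t'_def)
      obtain a where a: "a \<in> A" "g k t' + (L + n) \<le> g a t'" using T[of t'] t' k by auto
      then have "f k t + L \<le> f a t" using fg[of k t'] fg[of a t'] cb[of k] t'(1) by simp
      then show "\<exists>a\<in>A. f k t + L \<le> f a t" using a(1) by blast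
    qed
    then show "\<exists>T. \<forall>t\<ge>T. \<forall>k\<in>B. \<exists>a\<in>A. f k t + L \<le> f a t" by blast
  qed
qed

lemma EvP_shift: "EvP \<xi> A B \<omega> \<longleftrightarrow> EvP (\<lambda>s. \<xi> (n + s)) A B \<omega>"
  unfolding EvP_def
  by (rule shift_equiv[where c = "\<lambda>j. cnt \<xi> \<omega> j n" and n = n]) (simp_all add: cnt_shift cnt_le)

locale hj = prob_space M for M :: "'a measure" +
  fixes \<xi> :: "nat \<Rightarrow> 'a \<Rightarrow> 'd::finite"
  assumes indep: "indep_vars (\<lambda>_. count_space UNIV) \<xi> UNIV"
    and unif: "\<And>t k. prob {\<omega> \<in> space M. \<xi> t \<omega> = k} = 1 / real CARD('d)"
begin

lemma meas[measurable]: "\<xi> t \<in> M \<rightarrow>\<^sub>M count_space UNIV"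
  using indep unfolding indep_vars_def by auto

definition G :: "nat \<Rightarrow> 'a set set" where
  "G m = sigma_sets (space M) {\<xi> m -` X \<inter> space M | X. X \<in> sets (count_space UNIV)}"

lemma G_sub: "{\<xi> m -` X \<inter> space M | X. X \<in> sets (count_space UNIV)} \<subseteq> Pow (space M)"
  by auto

lemma EvP_zero_one: "prob {\<omega> \<in> space M. EvP \<xi> A B \<omega>} = 0 \<or> prob {\<omega> \<in> space M. EvP \<xi> A B \<omega>} = 1"
proof (rule kolmogorov_0_1_law[where A = G])
  show "sigma_algebra (space M) (G i)" for i
    unfolding G_def by (rule sigma_algebra_sigma_sets[OF G_sub])
  show "indep_sets G UNIV"
    using indep unfolding indep_vars_def G_def by auto
  show "{\<omega> \<in> space M. EvP \<xi> A B \<omega>} \<in> tail_events G"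
    unfolding tail_events_def
  proof (intro InterI, clarify)
    fix n
    define U where "U = \<Union> (G ` {n..})"
    have U_sub: "U \<subseteq> Pow (space M)"
      unfolding U_def G_def using sigma_sets_into_sp[OF G_sub] by blast
    define N where "N = sigma (space M) U"
    have sN: "sets N = sigma_sets (space M) U" unfolding N_def using U_sub by (rule sets_measure_of)
    have spN: "space N = space M" unfolding N_def using U_sub by (rule space_measure_of)
    have mN: "(\<lambda>s. \<xi> (n + s)) s \<in> N \<rightarrow>\<^sub>M count_space UNIV" for s
    proof (rule measurableI)
      fix X :: "'d set"
      have "\<xi> (n + s) -` X \<inter> space M \<in> G (n + s)"
        unfolding G_def by (rule sigma_sets.Basic) auto
      then have "\<xi> (n + s) -` X \<inter> space M \<in> U" unfolding U_def by auto
      then show "(\<lambda>s. \<xi> (n + s)) s -` X \<inter> space N \<in> sets N"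
        unfolding sN spN by auto
    qed auto
    have "{\<omega> \<in> space N. EvP (\<lambda>s. \<xi> (n + s)) A B \<omega>} \<in> sets N"
      using EvP_pred[of "\<lambda>s. \<xi> (n + s)" N A B] mN by measurable
    moreover have "{\<omega> \<in> space M. EvP \<xi> A B \<omega>} = {\<omega> \<in> space N. EvP (\<lambda>s. \<xi> (n + s)) A B \<omega>}"
      unfolding spN using EvP_shift[of \<xi> A B _ n] by auto
    ultimately show "{\<omega> \<in> space M. EvP \<xi> A B \<omega>} \<in> sigma_sets (space M) (\<Union> (G ` {n..}))"
      unfolding sN U_def by simp
  qed
qed

end


definition sw :: "'d \<Rightarrow> 'd \<Rightarrow> 'd \<Rightarrow> 'd" where
  "sw b c y = (if y = b then c else if y = c then b else y)"

lemma sw_sw[simp]: "sw b c (sw b c y) = y" by (simp add: sw_def)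
lemma sw_eq_iff: "sw b c y = z \<longleftrightarrow> y = sw b c z" by (auto simp: sw_def)

lemma PiM_count_all_sets:
  fixes I :: "nat set"
  assumes "finite I" "E \<subseteq> space (Pi\<^sub>M I (\<lambda>_. count_space (UNIV :: ('d::finite) set)))"
  shows "E \<in> sets (Pi\<^sub>M I (\<lambda>_. count_space (UNIV :: 'd set)))"
proof -
  have sp: "space (Pi\<^sub>M I (\<lambda>_. count_space (UNIV :: 'd set))) = (\<Pi>\<^sub>E i\<in>I. (UNIV :: 'd set))"
    by (simp add: space_PiM)
  have "finite (\<Pi>\<^sub>E i\<in>I. (UNIV :: 'd set))" using assms(1) by (intro finite_PiE) auto
  then have fin: "finite E" using assms(2) sp by (metis finite_subset)
  have E: "E = (\<Union>f\<in>E. (\<Pi>\<^sub>E i\<in>I. {f i}))"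
  proof -
    have "(\<Pi>\<^sub>E i\<in>I. {f i}) = {f}" if "f \<in> E" for f
      using that assms(2) sp by (intro PiE_singleton) (auto simp: PiE_def)
    then show ?thesis by auto
  qed
  have "(\<Union>f\<in>E. (\<Pi>\<^sub>E i\<in>I. {f i})) \<in> sets (Pi\<^sub>M I (\<lambda>_. count_space (UNIV :: 'd set)))"
    using fin assms(1) by (intro sets.finite_UN sets_PiM_I_finite) auto
  then show ?thesis using E by simp
qed

context hj begin

lemma emeasure_single: "emeasure M {\<omega> \<in> space M. \<xi> t \<omega> = k} = ennreal (1 / real CARD('d))"
  using unif[of t k] by (simp add: emeasure_eq_measure)

lemma distr_determined:
  assumes g: "g \<in> M \<rightarrow>\<^sub>M count_space UNIV"
    and h: "h \<in> M \<rightarrow>\<^sub>M count_space UNIV"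
    and eq: "\<And>x. emeasure M {\<omega> \<in> space M. g \<omega> = x} = emeasure M {\<omega> \<in> space M. h \<omega> = (x::'d)}"
  shows "distr M (count_space UNIV) g = distr M (count_space UNIV) h"
proof (rule measure_eqI)
  fix X :: "'d set" assume "X \<in> sets (distr M (count_space UNIV) g)"
  have "emeasure (distr M (count_space UNIV) g) X = (\<Sum>x\<in>X. emeasure (distr M (count_space UNIV) g) {x})"
    by (rule emeasure_eq_sum_singleton) auto
  also have "\<dots> = (\<Sum>x\<in>X. emeasure (distr M (count_space UNIV) h) {x})"
  proof (rule sum.cong[OF refl])
    fix x
    have "g -` {x} \<inter> space M = {\<omega> \<in> space M. g \<omega> = x}" "h -` {x} \<inter> space M = {\<omega> \<in> space M. h \<omega> = x}" by auto
    then show "emeasure (distr M (count_space UNIV) g) {x} = emeasure (distr M (count_space UNIV) h) {x}"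
      using eq[of x] g h by (simp add: emeasure_distr)
  qed
  also have "\<dots> = emeasure (distr M (count_space UNIV) h) X"
    by (rule emeasure_eq_sum_singleton[symmetric]) auto
  finally show "emeasure (distr M (count_space UNIV) g) X = emeasure (distr M (count_space UNIV) h) X" .
qed simp

definition MaxE :: "'d \<Rightarrow> nat \<Rightarrow> 'a set" where
  "MaxE b t = {\<omega> \<in> space M. \<forall>j. cnt \<xi> \<omega> j t \<le> cnt \<xi> \<omega> b t}"

lemma MaxE_swap: "prob (MaxE b t) = prob (MaxE c t)"
proof -
  define I where "I = {..t}"
  let ?P = "Pi\<^sub>M I (\<lambda>_. count_space (UNIV :: 'd set))"
  define D where "D = (\<lambda>\<omega>. \<lambda>s\<in>I. \<xi> s \<omega>)"
  define Ds where "Ds = (\<lambda>\<omega>. \<lambda>s\<in>I. sw b c (\<xi> s \<omega>))"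
  have I: "I \<noteq> {}" "finite I" by (auto simp: I_def)
  have mD: "D \<in> M \<rightarrow>\<^sub>M ?P" unfolding D_def by (intro measurable_restrict) auto
  have mDs: "Ds \<in> M \<rightarrow>\<^sub>M ?P" unfolding Ds_def by (intro measurable_restrict) auto
  have ind1: "indep_vars (\<lambda>_. count_space UNIV) \<xi> I"
    using indep by (rule indep_vars_subset) auto
  have ind2: "indep_vars (\<lambda>_. count_space UNIV) (\<lambda>s \<omega>. sw b c (\<xi> s \<omega>)) I"
    using indep_vars_compose2[OF ind1, where Y="\<lambda>_. sw b c" and N="\<lambda>_. count_space UNIV"] by auto
  have dd: "distr M (count_space UNIV) (\<lambda>\<omega>. sw b c (\<xi> s \<omega>)) = distr M (count_space UNIV) (\<xi> s)" for s
  proof (rule distr_determined)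
    fix x
    have "{\<omega> \<in> space M. sw b c (\<xi> s \<omega>) = x} = {\<omega> \<in> space M. \<xi> s \<omega> = sw b c x}"
      by (auto simp: sw_eq_iff)
    then show "emeasure M {\<omega> \<in> space M. sw b c (\<xi> s \<omega>) = x} = emeasure M {\<omega> \<in> space M. \<xi> s \<omega> = x}"
      by (simp add: emeasure_single)
  qed auto
  have "distr M ?P Ds = Pi\<^sub>M I (\<lambda>s. distr M (count_space UNIV) (\<lambda>\<omega>. sw b c (\<xi> s \<omega>)))"
    using ind2 indep_vars_iff_distr_eq_PiM'[OF I(1), where M'="\<lambda>_. count_space UNIV" and X="\<lambda>s \<omega>. sw b c (\<xi> s \<omega>)"]
    unfolding Ds_def by simp
  also have "\<dots> = Pi\<^sub>M I (\<lambda>s. distr M (count_space UNIV) (\<xi> s))" by (simp add: dd)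
  also have "\<dots> = distr M ?P D"
    using ind1 indep_vars_iff_distr_eq_PiM'[OF I(1), where M'="\<lambda>_. count_space UNIV" and X=\<xi>]
    unfolding D_def by simp
  finally have deq: "distr M ?P Ds = distr M ?P D" .
  define E where "E = {f \<in> space ?P. \<forall>j. card {s. s < t \<and> f s = j} \<le> card {s. s < t \<and> f s = c}}"
  have Es: "E \<in> sets ?P" using I(2) by (intro PiM_count_all_sets) (auto simp: E_def)
  have cD: "card {s. s < t \<and> D \<omega> s = j} = cnt \<xi> \<omega> j t" for \<omega> j
  proof -
    have "{s. s < t \<and> D \<omega> s = j} = {s. s < t \<and> \<xi> s \<omega> = j}" by (auto simp: D_def I_def)
    then show ?thesis by (simp add: cnt_def)
  qed
  have cDs: "card {s. s < t \<and> Ds \<omega> s = j} = cnt \<xi> \<omega> (sw b c j) t" for \<omega> j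
  proof -
    have "{s. s < t \<and> Ds \<omega> s = j} = {s. s < t \<and> \<xi> s \<omega> = sw b c j}" by (auto simp: Ds_def I_def sw_eq_iff)
    then show ?thesis by (simp add: cnt_def)
  qed
  have spD: "D \<omega> \<in> space ?P" "Ds \<omega> \<in> space ?P" for \<omega>
    by (auto simp: D_def Ds_def space_PiM)
  have pre1: "D -` E \<inter> space M = MaxE c t"
    using spD by (auto simp: E_def MaxE_def cD)
  have "sw b c c = b" by (simp add: sw_def)
  then have "(\<forall>j. cnt \<xi> \<omega> (sw b c j) t \<le> cnt \<xi> \<omega> (sw b c c) t) \<longleftrightarrow> (\<forall>j. cnt \<xi> \<omega> j t \<le> cnt \<xi> \<omega> b t)" for \<omega>
    by (metis sw_sw)
  then have pre2: "Ds -` E \<inter> space M = MaxE b t"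
    using spD by (auto simp: E_def MaxE_def cDs)
  have "prob (MaxE b t) = measure (distr M ?P Ds) E"
    using mDs Es by (simp add: measure_distr pre2)
  also have "\<dots> = measure (distr M ?P D) E" by (simp add: deq)
  also have "\<dots> = prob (MaxE c t)"
    using mD Es by (simp add: measure_distr pre1)
  finally show ?thesis .
qed

end

context hj begin

lemma MaxE_sets[measurable]: "MaxE b t \<in> sets M"
proof -
  have "MaxE b t = {\<omega> \<in> space M. \<forall>j. cnt \<xi> \<omega> j t + 0 \<le> cnt \<xi> \<omega> b t}" by (simp add: MaxE_def)
  also have "\<dots> \<in> sets M" using cnt_le_pred[OF meas, where t=t and L=0 and a=b] by measurable
  finally show ?thesis .
qed

lemma MaxE_ge: "prob (MaxE b t) \<ge> 1 / real CARD('d)"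
proof -
  have cov: "space M \<subseteq> (\<Union>c. MaxE c t)"
  proof
    fix \<omega> assume \<omega>: "\<omega> \<in> space M"
    define f where "f j = cnt \<xi> \<omega> j t" for j
    have "Max (range f) \<in> range f" by (intro Max_in) auto
    then obtain c where c: "f c = Max (range f)" by (metis imageE)
    have "\<forall>j. f j \<le> f c" unfolding c by (auto intro: Max_ge)
    then show "\<omega> \<in> (\<Union>c. MaxE c t)" using \<omega> by (auto simp: MaxE_def f_def)
  qed
  have "1 = prob (space M)" by (simp add: prob_space)
  also have "\<dots> \<le> prob (\<Union>c. MaxE c t)"
    using cov by (intro finite_measure_mono) auto
  also have "\<dots> \<le> (\<Sum>c\<in>UNIV. prob (MaxE c t))"
    by (intro finite_measure_subadditive_finite) auto
  also have "\<dots> = (\<Sum>c\<in>(UNIV::'d set). prob (MaxE b t))"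
    by (rule sum.cong[OF refl]) (rule MaxE_swap)
  also have "\<dots> = real CARD('d) * prob (MaxE b t)" by simp
  finally show ?thesis by (simp add: field_simps)
qed

lemma EvP_null:
  assumes "B \<noteq> {}"
  shows "prob {\<omega> \<in> space M. EvP \<xi> A B \<omega>} = 0"
proof -
  obtain b where b: "b \<in> B" using assms by auto
  define H where "H T = {\<omega> \<in> space M. \<forall>t\<ge>T. \<exists>a\<in>A. cnt \<xi> \<omega> b t + 1 \<le> cnt \<xi> \<omega> a t}" for T
  have Hs: "H T \<in> sets M" for T
    unfolding H_def using cnt_le_pred[OF meas, where L=1 and k=b] by measurable
  have inc: "incseq H" unfolding incseq_def H_def by auto
  have sub: "{\<omega> \<in> space M. EvP \<xi> A B \<omega>} \<subseteq> (\<Union>T. H T)"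
  proof
    fix \<omega> assume "\<omega> \<in> {\<omega> \<in> space M. EvP \<xi> A B \<omega>}"
    then have "\<omega> \<in> space M" "\<exists>T. \<forall>t\<ge>T. \<forall>k\<in>B. \<exists>a\<in>A. cnt \<xi> \<omega> k t + 1 \<le> cnt \<xi> \<omega> a t"
      unfolding EvP_def by blast+
    then show "\<omega> \<in> (\<Union>T. H T)" using b unfolding H_def by blast
  qed
  have Hle: "prob (H T) \<le> 1 - 1 / real CARD('d)" for T
  proof -
    have "H T \<subseteq> space M - MaxE b T"
    proof
      fix \<omega> assume "\<omega> \<in> H T"
      then obtain a where a: "cnt \<xi> \<omega> b T + 1 \<le> cnt \<xi> \<omega> a T" "\<omega> \<in> space M" unfolding H_def by auto
      then have "\<not> (cnt \<xi> \<omega> a T \<le> cnt \<xi> \<omega> b T)" by simp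
      then show "\<omega> \<in> space M - MaxE b T" using a(2) unfolding MaxE_def by blast
    qed
    then have "prob (H T) \<le> prob (space M - MaxE b T)" by (intro finite_measure_mono) auto
    also have "\<dots> = 1 - prob (MaxE b T)" by (simp add: prob_compl)
    finally show ?thesis using MaxE_ge[of b T] by simp
  qed
  have "(\<lambda>T. prob (H T)) \<longlonglongrightarrow> prob (\<Union>T. H T)"
    using Hs inc by (intro finite_Lim_measure_incseq) auto
  then have "prob (\<Union>T. H T) \<le> 1 - 1 / real CARD('d)"
    by (rule LIMSEQ_le_const2) (use Hle in auto)
  moreover have "prob {\<omega> \<in> space M. EvP \<xi> A B \<omega>} \<le> prob (\<Union>T. H T)"
    using sub Hs by (intro finite_measure_mono) auto
  moreover have "1 / real CARD('d) > 0" by simp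
  ultimately have "prob {\<omega> \<in> space M. EvP \<xi> A B \<omega>} \<noteq> 1" by linarith
  then show ?thesis using EvP_zero_one[of A B] by auto
qed

end


lemma Phi_cont: "isCont (cdf std_normal_distribution) x"
proof -
  interpret real_distribution std_normal_distribution by (rule real_dist_normal_dist)
  have "emeasure std_normal_distribution {x} = 0"
    by (subst emeasure_density) (auto intro!: nn_integral_null_set)
  then show ?thesis by (simp add: isCont_cdf measure_def)
qed

context hj begin

lemma anti_conc:
  assumes jk: "j \<noteq> k"
  shows "(\<lambda>t. prob {\<omega> \<in> space M. \<bar>real (cnt \<xi> \<omega> j t) - real (cnt \<xi> \<omega> k t)\<bar> \<le> K}) \<longlonglongrightarrow> 0"
proof -
  define g :: "'d \<Rightarrow> real" where "g y = (if y = j then 1 else 0) - (if y = k then 1 else 0)" for y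
  define Y where "Y s \<omega> = g (\<xi> s \<omega>)" for s \<omega>
  define d where "d = real CARD('d)"
  have dpos: "d > 0" by (simp add: d_def)
  define \<sigma> where "\<sigma> = sqrt (2 / d)"
  have \<sigma>pos: "\<sigma> > 0" using dpos by (simp add: \<sigma>_def)
  have \<sigma>2: "\<sigma>\<^sup>2 = 2 / d" using dpos by (simp add: \<sigma>_def)
  define Aj where "Aj s = {\<omega> \<in> space M. \<xi> s \<omega> = j}" for s
  define Ak where "Ak s = {\<omega> \<in> space M. \<xi> s \<omega> = k}" for s
  have Aj_s[measurable]: "Aj s \<in> sets M" for s unfolding Aj_def by measurable
  have Ak_s[measurable]: "Ak s \<in> sets M" for s unfolding Ak_def by measurable
  have pAj: "prob (Aj s) = 1 / d" for s unfolding Aj_def d_def by (rule unif)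
  have pAk: "prob (Ak s) = 1 / d" for s unfolding Ak_def d_def by (rule unif)
  have Y_meas[measurable]: "Y s \<in> borel_measurable M" for s unfolding Y_def by measurable
  have Y_ind: "Y s \<omega> = indicator (Aj s) \<omega> - indicator (Ak s) \<omega>" if "\<omega> \<in> space M" for s \<omega>
    using that jk by (auto simp: Y_def g_def Aj_def Ak_def indicator_def)
  have Y2_ind: "(Y s \<omega>)\<^sup>2 = indicator (Aj s) \<omega> + indicator (Ak s) \<omega>" if "\<omega> \<in> space M" for s \<omega>
    using that jk by (auto simp: Y_def g_def Aj_def Ak_def indicator_def)
  have int_ind: "integrable M (indicator A :: 'a \<Rightarrow> real)" if "A \<in> sets M" for A
    using that by (intro integrable_const_bound[where B=1]) (auto simp: indicator_def)
  have EY: "expectation (Y s) = 0" for s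
  proof -
    have "expectation (Y s) = expectation (\<lambda>\<omega>. indicator (Aj s) \<omega> - indicator (Ak s) \<omega>)"
      by (rule Bochner_Integration.integral_cong) (auto simp: Y_ind)
    also have "\<dots> = prob (Aj s) - prob (Ak s)"
      by (simp add: int_ind Bochner_Integration.integral_diff)
    finally show ?thesis by (simp add: pAj pAk)
  qed
  have EY2: "expectation (\<lambda>\<omega>. (Y s \<omega>)\<^sup>2) = 2 / d" for s
  proof -
    have "expectation (\<lambda>\<omega>. (Y s \<omega>)\<^sup>2) = expectation (\<lambda>\<omega>. indicator (Aj s) \<omega> + indicator (Ak s) \<omega>)"
      by (rule Bochner_Integration.integral_cong) (auto simp: Y2_ind)
    also have "\<dots> = prob (Aj s) + prob (Ak s)"
      by (simp add: int_ind Bochner_Integration.integral_add)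
    finally show ?thesis by (simp add: pAj pAk)
  qed
  have indY: "indep_vars (\<lambda>_. borel) Y UNIV"
    unfolding Y_def
    by (rule indep_vars_compose2[OF indep, where Y="\<lambda>_. g" and N="\<lambda>_. borel"]) simp
  have sqint: "integrable M (\<lambda>x. (Y n x)\<^sup>2)" for n
    by (intro integrable_const_bound[where B=1]) (auto simp: Y_def g_def)
  have var: "expectation (\<lambda>x. (Y n x - expectation (Y n))\<^sup>2) = \<sigma>\<^sup>2" for n
    by (simp add: EY EY2 \<sigma>2)
  have dxi: "distr M (count_space UNIV) (\<xi> n) = distr M (count_space UNIV) (\<xi> 0)" for n
    by (rule distr_determined) (auto simp: emeasure_single)
  have distY: "distr M borel (Y n) = distr M borel (Y 0)" for n
  proof -
    have Yf: "Y m = g \<circ> \<xi> m" for m by (rule ext) (simp add: Y_def)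
    have gm: "g \<in> count_space UNIV \<rightarrow>\<^sub>M borel" by simp
    have "distr M borel (Y n) = distr (distr M (count_space UNIV) (\<xi> n)) borel g"
      unfolding Yf by (rule distr_distr[OF gm meas, symmetric])
    also have "\<dots> = distr (distr M (count_space UNIV) (\<xi> 0)) borel g" by (subst dxi[of n]) (rule refl)
    also have "\<dots> = distr M borel (Y 0)"
      unfolding Yf by (rule distr_distr[OF gm meas])
    finally show ?thesis .
  qed
  define Z where "Z t \<omega> = (\<Sum>i<t. Y i \<omega>) / sqrt (real t * \<sigma>\<^sup>2)" for t \<omega>
  have Z_meas[measurable]: "Z t \<in> borel_measurable M" for t unfolding Z_def by measurable
  have clt: "weak_conv_m (\<lambda>t. distr M borel (Z t)) std_normal_distribution"
    unfolding Z_def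
    by (rule central_limit_theorem_zero_mean[OF indY EY \<sigma>pos sqint var distY])
  define F where "F t z = prob {\<omega> \<in> space M. Z t \<omega> \<le> z}" for t z
  define \<Phi> where "\<Phi> = cdf std_normal_distribution"
  have Fconv: "(\<lambda>t. F t z) \<longlonglongrightarrow> \<Phi> z" for z
  proof -
    have "cdf (distr M borel (Z t)) z = F t z" for t
    proof -
      have "Z t -` {..z} \<inter> space M = {\<omega> \<in> space M. Z t \<omega> \<le> z}" by auto
      then show ?thesis by (simp add: cdf_def measure_distr F_def)
    qed
    then show ?thesis using clt Phi_cont[of z]
      unfolding weak_conv_m_def weak_conv_def \<Phi>_def by auto
  qed
  define D where "D t \<omega> = real (cnt \<xi> \<omega> j t) - real (cnt \<xi> \<omega> k t)" for t \<omega>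
  have DY: "D t \<omega> = (\<Sum>i<t. Y i \<omega>)" for t \<omega>
  proof -
    have "D t \<omega> = (\<Sum>i<t. (if \<xi> i \<omega> = j then 1 else 0::real)) - (\<Sum>i<t. (if \<xi> i \<omega> = k then 1 else 0::real))"
      by (simp add: D_def cnt_sum of_nat_sum if_distrib)
    also have "\<dots> = (\<Sum>i<t. Y i \<omega>)" by (simp add: Y_def g_def sum_subtractf)
    finally show ?thesis .
  qed
  define St where "St t = {\<omega> \<in> space M. \<bar>D t \<omega>\<bar> \<le> K}" for t
  have bound: "prob (St t) \<le> F t \<delta> - F t (- \<delta>)"
    if t: "t > 0" and \<delta>: "\<delta> > 0" and big: "K / \<delta> < sqrt (real t * \<sigma>\<^sup>2)" for t \<delta>
  proof -
    define s where "s = sqrt (real t * \<sigma>\<^sup>2)"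
    have spos: "s > 0" using t \<sigma>pos by (simp add: s_def)
    have "K / \<delta> < s" using big by (simp add: s_def)
    then have "K < s * \<delta>" using \<delta> by (simp add: pos_divide_less_eq)
    then have "K < \<delta> * s" by (simp add: mult.commute)
    have sub: "St t \<subseteq> {\<omega> \<in> space M. Z t \<omega> \<le> \<delta>} - {\<omega> \<in> space M. Z t \<omega> \<le> - \<delta>}"
    proof
      fix \<omega> assume "\<omega> \<in> St t"
      then have \<omega>: "\<omega> \<in> space M" "\<bar>D t \<omega>\<bar> \<le> K" by (auto simp: St_def)
      then have "\<bar>D t \<omega>\<bar> < \<delta> * s" using \<open>K < \<delta> * s\<close> by linarith
      then have "\<bar>D t \<omega>\<bar> / s < \<delta>" using spos by (simp add: pos_divide_less_eq)
      moreover have "\<bar>D t \<omega> / s\<bar> = \<bar>D t \<omega>\<bar> / s" using spos by simp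
      moreover have "Z t \<omega> = D t \<omega> / s" by (simp add: Z_def DY s_def)
      ultimately have "\<bar>Z t \<omega>\<bar> < \<delta>" by (simp only:)
      then have "Z t \<omega> \<le> \<delta>" "\<not> Z t \<omega> \<le> - \<delta>" by linarith+
      then show "\<omega> \<in> {\<omega> \<in> space M. Z t \<omega> \<le> \<delta>} - {\<omega> \<in> space M. Z t \<omega> \<le> - \<delta>}"
        using \<omega>(1) by blast
    qed
    have "prob (St t) \<le> prob ({\<omega> \<in> space M. Z t \<omega> \<le> \<delta>} - {\<omega> \<in> space M. Z t \<omega> \<le> - \<delta>})"
      using sub by (intro finite_measure_mono) auto
    also have "\<dots> = F t \<delta> - F t (- \<delta>)" unfolding F_def using \<delta>
      by (subst finite_measure_Diff) auto
    finally show ?thesis .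
  qed
  show ?thesis
  proof (rule LIMSEQ_I)
    fix r :: real assume r: "r > 0"
    have "(\<Phi> \<longlongrightarrow> \<Phi> 0) (at 0)" using Phi_cont[of 0] unfolding \<Phi>_def by (simp add: isCont_def)
    then obtain s where s: "s > 0" "\<And>x. x \<noteq> 0 \<and> norm (x - 0) < s \<longrightarrow> norm (\<Phi> x - \<Phi> 0) < r / 4"
      using LIM_D[of \<Phi> "\<Phi> 0" 0 "r/4"] r by auto
    define \<delta> where "\<delta> = s / 2"
    have \<delta>: "\<delta> > 0" "\<delta> < s" using s by (auto simp: \<delta>_def)
    have p1: "\<bar>\<Phi> \<delta> - \<Phi> 0\<bar> < r / 4" using s(2)[of \<delta>] \<delta> by auto
    have p2: "\<bar>\<Phi> (-\<delta>) - \<Phi> 0\<bar> < r / 4" using s(2)[of "-\<delta>"] \<delta> by auto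
    have r4: "r / 4 > 0" using r by simp
    have e1: "\<forall>\<^sub>F t in sequentially. dist (F t \<delta>) (\<Phi> \<delta>) < r / 4"
      by (rule tendstoD[OF Fconv r4])
    have e2: "\<forall>\<^sub>F t in sequentially. dist (F t (-\<delta>)) (\<Phi> (-\<delta>)) < r / 4"
      by (rule tendstoD[OF Fconv r4])
    have e3: "\<forall>\<^sub>F t in sequentially. K / \<delta> < sqrt (real t * \<sigma>\<^sup>2) \<and> t > 0"
    proof -
      define N where "N = nat \<lceil>(K / \<delta>)\<^sup>2 / \<sigma>\<^sup>2\<rceil> + 1"
      have "K / \<delta> < sqrt (real t * \<sigma>\<^sup>2) \<and> t > 0" if "t \<ge> N" for t
      proof -
        have "(K / \<delta>)\<^sup>2 / \<sigma>\<^sup>2 < real t" using that unfolding N_def by linarith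
        then have "(K / \<delta>)\<^sup>2 < real t * \<sigma>\<^sup>2" using \<sigma>pos by (simp add: divide_less_eq)
        then have "K / \<delta> < sqrt (real t * \<sigma>\<^sup>2)" by (rule real_less_rsqrt)
        moreover have "t > 0" using that unfolding N_def by simp
        ultimately show ?thesis by simp
      qed
      then show ?thesis unfolding eventually_sequentially by blast
    qed
    have "\<forall>\<^sub>F t in sequentially. norm (prob (St t) - 0) < r"
      using e1 e2 e3
    proof eventually_elim
      case (elim t)
      have "prob (St t) \<le> F t \<delta> - F t (- \<delta>)" using bound[of t \<delta>] elim \<delta> by auto
      also have "\<dots> < r" using elim p1 p2 unfolding dist_real_def by linarith
      finally show ?case by simp
    qed
    then show "\<exists>no. \<forall>n\<ge>no. norm (prob {\<omega> \<in> space M. \<bar>real (cnt \<xi> \<omega> j n) - real (cnt \<xi> \<omega> k n)\<bar> \<le> K} - 0) < r"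
      unfolding eventually_sequentially St_def D_def by blast
  qed
qed

end


lemma par_unit:
  fixes a b :: "real ^ 'd"
  assumes "norm a = 1" "norm b = 1"
  shows "(norm (a + b))\<^sup>2 = 4 - (norm (a - b))\<^sup>2"
proof -
  have "(norm (a + b))\<^sup>2 + (norm (a - b))\<^sup>2 = 2 * (norm a)\<^sup>2 + 2 * (norm b)\<^sup>2"
    by (simp add: power2_norm_eq_inner inner_add_left inner_add_right inner_diff_left inner_diff_right inner_commute)
  then show ?thesis using assms by simp
qed

lemma two_sides:
  fixes X1 X2 :: "real ^ 'd"
  assumes "norm X1 = 1" "\<sigma> = -1 \<or> \<sigma> = 1" "\<bar>s1\<bar> = 1" "s2 = \<sigma> * s1"
  shows "norm (X2 - \<sigma> *\<^sub>R X1) \<le> norm (X2 - s2 *\<^sub>R e) + norm (X1 - s1 *\<^sub>R e)"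
proof -
  have eq: "X2 - \<sigma> *\<^sub>R X1 = (X2 - s2 *\<^sub>R e) - \<sigma> *\<^sub>R (X1 - s1 *\<^sub>R e)"
    using assms(4) by (simp add: algebra_simps)
  have "norm (X2 - \<sigma> *\<^sub>R X1) \<le> norm (X2 - s2 *\<^sub>R e) + norm (\<sigma> *\<^sub>R (X1 - s1 *\<^sub>R e))"
    unfolding eq by (rule norm_triangle_ineq4)
  also have "norm (\<sigma> *\<^sub>R (X1 - s1 *\<^sub>R e)) = norm (X1 - s1 *\<^sub>R e)" using assms(2) by auto
  finally show ?thesis .
qed

theorem theorem4p11:
  fixes M :: "'a measure" and \<xi> :: "nat \<Rightarrow> 'a \<Rightarrow> 'd::finite"
    and \<eta> :: real and x1 x2 :: "real ^ 'd"
  assumes "prob_space M"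
    and "prob_space.indep_vars M (\<lambda>_. count_space UNIV) \<xi> UNIV"
    and "\<And>t k. measure M {\<omega> \<in> space M. \<xi> t \<omega> = k} = 1 / real CARD('d)"
    and "\<eta> > 0"
    and "norm x1 = 1" and "norm x2 = 1"
    and "support x1 = support x2"
    and "x1 \<noteq> x2" and "x1 \<noteq> - x2"
  defines "X \<equiv> \<lambda>\<omega> t. (hjmr_traj \<eta> (\<lambda>\<omega> t. \<xi> t \<omega>) x1 \<omega> t,
                         hjmr_traj \<eta> (\<lambda>\<omega> t. \<xi> t \<omega>) x2 \<omega> t)"
  shows "(\<forall>\<epsilon>>0. (\<lambda>t. measure M {\<omega> \<in> space M. rho_P (X \<omega> t) \<ge> \<epsilon>}) \<longlonglongrightarrow> 0)
       \<and> (AE \<omega> in M. \<not> ((\<lambda>t. norm (fst (X \<omega> t) - snd (X \<omega> t))) \<longlonglongrightarrow> 0)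
                    \<and> \<not> ((\<lambda>t. norm (fst (X \<omega> t) - snd (X \<omega> t))) \<longlonglongrightarrow> 2))
       \<and> (AE \<omega> in M. \<not> ((\<lambda>t. rho_P (X \<omega> t)) \<longlonglongrightarrow> 0))"
proof -
  interpret hj M \<xi>
    using assms(1-3) by (simp add: hj_def hj_axioms_def)
  define q where "q = 1 + \<eta>"
  have q1: "q > 1" using assms(4) by (simp add: q_def)
  define W1 where "W1 \<omega> t = sphere_proj (wvec q x1 (\<lambda>j. cnt \<xi> \<omega> j t))" for \<omega> t
  define W2 where "W2 \<omega> t = sphere_proj (wvec q x2 (\<lambda>j. cnt \<xi> \<omega> j t))" for \<omega> t
  have X: "X \<omega> t = (W1 \<omega> t, W2 \<omega> t)" for \<omega> t
    unfolding X_def W1_def W2_def q_def using assms(4-6) by (simp add: traj_formula)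
  have nW1: "norm (W1 \<omega> t) = 1" for \<omega> t
    unfolding W1_def using assms(5) q1 by (rule_tac norm_sphere_proj, rule_tac wvec_nonzero) auto
  have nW2: "norm (W2 \<omega> t) = 1" for \<omega> t
    unfolding W2_def using assms(6) q1 by (rule_tac norm_sphere_proj, rule_tac wvec_nonzero) auto
  have supp: "(x1 $ j = 0) = (x2 $ j = 0)" for j
    using assms(7) unfolding support_def by (auto simp: set_eq_iff)
  define S where "S = {j. x1 $ j \<noteq> 0}"
  have finS: "finite S" by simp
  have x10: "x1 \<noteq> 0" using assms(5) by auto
  then obtain j0 where "x1 $ j0 \<noteq> 0" by (metis vec_eq_iff zero_index)
  then have Sne: "S \<noteq> {}" unfolding S_def by auto
  have part1: "(\<lambda>t. measure M {\<omega> \<in> space M. rho_P (X \<omega> t) \<ge> \<epsilon>}) \<longlonglongrightarrow> 0" if \<epsilon>: "\<epsilon> > 0" for \<epsilon>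
  proof -
    define m where "m = Min ((\<lambda>j. \<bar>x1 $ j\<bar>) ` S \<union> (\<lambda>j. \<bar>x2 $ j\<bar>) ` S)"
    have "\<forall>j\<in>S. 0 < \<bar>x1 $ j\<bar> \<and> 0 < \<bar>x2 $ j\<bar>"
    proof
      fix j assume "j \<in> S"
      then have "x1 $ j \<noteq> 0" by (simp add: S_def)
      moreover then have "x2 $ j \<noteq> 0" using supp[of j] by simp
      ultimately show "0 < \<bar>x1 $ j\<bar> \<and> 0 < \<bar>x2 $ j\<bar>" by simp
    qed
    then have allpos: "\<forall>a\<in>(\<lambda>j. \<bar>x1 $ j\<bar>) ` S \<union> (\<lambda>j. \<bar>x2 $ j\<bar>) ` S. 0 < a"
      by blast
    have mpos: "m > 0" unfolding m_def using finS Sne allpos by (subst Min_gr_iff) auto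
    have m1: "m \<le> \<bar>x1 $ j\<bar>" if "j \<in> S" for j
      unfolding m_def using that finS by (intro Min_le) auto
    have m2: "m \<le> \<bar>x2 $ j\<bar>" if "j \<in> S" for j
      unfolding m_def using that finS by (intro Min_le) auto
    define d where "d = real CARD('d)"
    obtain K where K: "4 * d / (m * \<epsilon>) < q ^ K" using real_arch_pow[OF q1, of "4 * d / (m * \<epsilon>)"] by (elim exE)
    have "q ^ K \<le> q ^ (K + 1)" using q1 by (intro power_increasing) auto
    then have "4 * d / (m * \<epsilon>) < q ^ (K+1)" using K by linarith
    moreover have "m * \<epsilon> > 0" using mpos \<epsilon> by simp
    ultimately have "4 * d < q ^ (K+1) * (m * \<epsilon>)" by (simp add: pos_divide_less_eq)
    then have "4 * d < \<epsilon> * (m * q ^ (K+1))" by (simp add: mult_ac)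
    moreover have "m * q ^ (K+1) > 0" using mpos q1 by simp
    ultimately have Kb: "4 * d / (m * q ^ (K+1)) < \<epsilon>" by (simp add: pos_divide_less_eq)
    define P where "P = {p :: 'd \<times> 'd. fst p \<in> S \<and> snd p \<in> S \<and> fst p \<noteq> snd p}"
    have finP: "finite P" by simp
    define Bd where "Bd p t = {\<omega> \<in> space M. \<bar>real (cnt \<xi> \<omega> (fst p) t) - real (cnt \<xi> \<omega> (snd p) t)\<bar> \<le> real K}" for p t
    have Bd_sets: "Bd p t \<in> sets M" for p t
      unfolding Bd_def using cnt_real_meas[OF meas, where j="fst p" and t=t] cnt_real_meas[OF meas, where j="snd p" and t=t]
      by measurable
    have subs: "{\<omega> \<in> space M. rho_P (X \<omega> t) \<ge> \<epsilon>} \<subseteq> (\<Union>p\<in>P. Bd p t)" for t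
    proof
      fix \<omega> assume \<omega>: "\<omega> \<in> {\<omega> \<in> space M. rho_P (X \<omega> t) \<ge> \<epsilon>}"
      show "\<omega> \<in> (\<Union>p\<in>P. Bd p t)"
      proof (rule ccontr)
        assume nb: "\<omega> \<notin> (\<Union>p\<in>P. Bd p t)"
        define n where "n j = cnt \<xi> \<omega> j t" for j
        have far: "\<bar>real (n j) - real (n k)\<bar> > real K" if "j \<in> S" "k \<in> S" "j \<noteq> k" for j k
        proof -
          have "(j, k) \<in> P" using that by (simp add: P_def)
          then have "\<omega> \<notin> Bd (j, k) t" using nb by blast
          then have "\<not> \<bar>real (n j) - real (n k)\<bar> \<le> real K" using \<omega> by (simp add: Bd_def n_def)
          then show ?thesis by linarith
        qed
        have "Max (n ` S) \<in> n ` S" using finS Sne by (intro Max_in) auto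
        then obtain k where k: "k \<in> S" "n k = Max (n ` S)" by (metis imageE)
        have gap: "n j + K + 1 \<le> n k" if "j \<in> S" "j \<noteq> k" for j
        proof -
          have "n j \<le> n k" unfolding k(2) using that finS by auto
          moreover have "\<bar>real (n j) - real (n k)\<bar> > real K" using far[OF that(1) k(1) that(2)] .
          ultimately show ?thesis by linarith
        qed
        have xk1: "x1 $ k \<noteq> 0" and xk2: "x2 $ k \<noteq> 0" using k(1) supp by (auto simp: S_def)
        have g1: "cnt \<xi> \<omega> j t + K + 1 \<le> cnt \<xi> \<omega> k t" if "j \<noteq> k" "x1 $ j \<noteq> 0" for j
          using gap[of j] that by (simp add: S_def n_def)
        have g2: "cnt \<xi> \<omega> j t + K + 1 \<le> cnt \<xi> \<omega> k t" if "j \<noteq> k" "x2 $ j \<noteq> 0" for j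
          using gap[of j] that supp[of j] by (simp add: S_def n_def)
        have qge: "q \<ge> 1" using q1 by simp
        have c1: "norm (W1 \<omega> t - sgn (x1 $ k) *\<^sub>R axis k 1) \<le> 2 * d / (m * q ^ (K+1))"
          unfolding W1_def d_def by (rule concentrate[where n="\<lambda>j. cnt \<xi> \<omega> j t" and K=K, OF qge assms(5) mpos m1[OF k(1)] g1])
        have c2: "norm (W2 \<omega> t - sgn (x2 $ k) *\<^sub>R axis k 1) \<le> 2 * d / (m * q ^ (K+1))"
          unfolding W2_def d_def by (rule concentrate[where n="\<lambda>j. cnt \<xi> \<omega> j t" and K=K, OF qge assms(6) mpos m2[OF k(1)] g2])
        define \<sigma> where "\<sigma> = sgn (x1 $ k) * sgn (x2 $ k)"
        have d1: "sgn (x1 $ k) = 1 \<or> sgn (x1 $ k) = -1" using xk1 by (simp add: sgn_if)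
        have d2: "sgn (x2 $ k) = 1 \<or> sgn (x2 $ k) = -1" using xk2 by (simp add: sgn_if)
        have s1: "\<bar>sgn (x1 $ k)\<bar> = 1" using d1 by auto
        have \<sigma>v: "\<sigma> = -1 \<or> \<sigma> = 1" using d1 d2 unfolding \<sigma>_def by auto
        have s2eq: "sgn (x2 $ k) = \<sigma> * sgn (x1 $ k)"
          using d1 unfolding \<sigma>_def by auto
        have "rho_P (X \<omega> t) \<le> norm (W2 \<omega> t - \<sigma> *\<^sub>R W1 \<omega> t)"
          unfolding X by (rule rho_le[OF nW1 \<sigma>v])
        also have "\<dots> \<le> norm (W2 \<omega> t - sgn (x2 $ k) *\<^sub>R axis k 1) + norm (W1 \<omega> t - sgn (x1 $ k) *\<^sub>R axis k 1)"
          by (rule two_sides[OF nW1 \<sigma>v s1 s2eq])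
        also have "\<dots> \<le> 2 * d / (m * q ^ (K+1)) + 2 * d / (m * q ^ (K+1))" using c2 c1 by (rule add_mono)
        also have "\<dots> = 4 * d / (m * q ^ (K+1))" by (simp add: add_divide_distrib[symmetric])
        also have "\<dots> < \<epsilon>" by (rule Kb)
        finally show False using \<omega> by simp
      qed
    qed
    have le: "measure M {\<omega> \<in> space M. rho_P (X \<omega> t) \<ge> \<epsilon>} \<le> (\<Sum>p\<in>P. prob (Bd p t))" for t
    proof -
      have "measure M {\<omega> \<in> space M. rho_P (X \<omega> t) \<ge> \<epsilon>} \<le> prob (\<Union>p\<in>P. Bd p t)"
        using subs[of t] Bd_sets finP by (intro finite_measure_mono) auto
      also have "\<dots> \<le> (\<Sum>p\<in>P. prob (Bd p t))"
        using Bd_sets finP by (intro finite_measure_subadditive_finite) auto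
      finally show ?thesis .
    qed
    have lim: "(\<lambda>t. \<Sum>p\<in>P. prob (Bd p t)) \<longlonglongrightarrow> 0"
    proof (rule tendsto_null_sum)
      fix p assume "p \<in> P"
      then have "fst p \<noteq> snd p" by (simp add: P_def)
      then show "(\<lambda>t. prob (Bd p t)) \<longlonglongrightarrow> 0" unfolding Bd_def by (rule anti_conc)
    qed
    show ?thesis
    proof (rule tendsto_sandwich[OF _ _ tendsto_const lim])
      show "\<forall>\<^sub>F n in sequentially. 0 \<le> measure M {\<omega> \<in> space M. rho_P (X \<omega> n) \<ge> \<epsilon>}"
        by (rule always_eventually) simp
      show "\<forall>\<^sub>F n in sequentially. measure M {\<omega> \<in> space M. rho_P (X \<omega> n) \<ge> \<epsilon>} \<le> (\<Sum>p\<in>P. prob (Bd p n))"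
        by (rule always_eventually) (rule allI, rule le)
    qed
  qed
  have AEev: "AE \<omega> in M. \<forall>p\<in>(UNIV :: ('d set \<times> 'd set) set). snd p \<noteq> {} \<longrightarrow> \<not> EvP \<xi> (fst p) (snd p) \<omega>"
  proof (rule AE_finite_allI)
    fix p :: "'d set \<times> 'd set"
    show "AE \<omega> in M. snd p \<noteq> {} \<longrightarrow> \<not> EvP \<xi> (fst p) (snd p) \<omega>"
    proof (cases "snd p = {}")
      case False
      have es: "{\<omega> \<in> space M. EvP \<xi> (fst p) (snd p) \<omega>} \<in> sets M"
        using EvP_pred[OF meas, where A="fst p" and B="snd p"] by measurable
      have "AE \<omega> in M. \<omega> \<notin> {\<omega> \<in> space M. EvP \<xi> (fst p) (snd p) \<omega>}"
        using EvP_null[OF False, of "fst p"] prob_eq_0[OF es] by simp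
      then show ?thesis by (rule AE_mp) (auto intro!: AE_I2)
    qed simp
  qed simp
  have noRho: "AE \<omega> in M. \<not> ((\<lambda>t. rho_P (X \<omega> t)) \<longlonglongrightarrow> 0)"
    using AEev
  proof (rule AE_mp, intro AE_I2 impI notI)
    fix \<omega>
    assume ev: "\<forall>p\<in>(UNIV :: ('d set \<times> 'd set) set). snd p \<noteq> {} \<longrightarrow> \<not> EvP \<xi> (fst p) (snd p) \<omega>"
    assume rl: "(\<lambda>t. rho_P (X \<omega> t)) \<longlonglongrightarrow> 0"
    have minors: "(\<lambda>t. W1 \<omega> t $ j * W2 \<omega> t $ k - W1 \<omega> t $ k * W2 \<omega> t $ j) \<longlonglongrightarrow> 0" for j k
    proof (rule Lim_null_comparison)
      show "\<forall>\<^sub>F t in sequentially. norm (W1 \<omega> t $ j * W2 \<omega> t $ k - W1 \<omega> t $ k * W2 \<omega> t $ j) \<le> 4 * rho_P (X \<omega> t)"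
        using minor_le_rho[OF nW1 nW2] unfolding X by simp
      show "(\<lambda>t. 4 * rho_P (X \<omega> t)) \<longlonglongrightarrow> 0" using tendsto_mult_right_zero[OF rl, of 4] by simp
    qed
    have mono1: "cnt \<xi> \<omega> j t \<le> cnt \<xi> \<omega> j (Suc t)" for t j by (simp add: cnt_Suc)
    have mono2: "cnt \<xi> \<omega> j (Suc t) \<le> cnt \<xi> \<omega> j t + 1" for t j by (simp add: cnt_Suc)
    have minors': "(\<lambda>t. sphere_proj (wvec q x1 (\<lambda>j. cnt \<xi> \<omega> j t)) $ j * sphere_proj (wvec q x2 (\<lambda>j. cnt \<xi> \<omega> j t)) $ k
       - sphere_proj (wvec q x1 (\<lambda>j. cnt \<xi> \<omega> j t)) $ k * sphere_proj (wvec q x2 (\<lambda>j. cnt \<xi> \<omega> j t)) $ j) \<longlonglongrightarrow> 0" for j k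
      using minors[of j k] unfolding W1_def W2_def .
    have "\<exists>A B. B \<noteq> {} \<and> (\<forall>L. \<exists>T. \<forall>t\<ge>T. \<forall>k\<in>B. \<exists>a\<in>A. cnt \<xi> \<omega> k t + L \<le> cnt \<xi> \<omega> a t)"
      by (rule core[where n="\<lambda>t j. cnt \<xi> \<omega> j t", OF q1 assms(5) assms(6) supp assms(8) assms(9) mono1 mono2 minors'])
    then obtain A B where AB: "B \<noteq> {}" "\<forall>L. \<exists>T. \<forall>t\<ge>T. \<forall>k\<in>B. \<exists>a\<in>A. cnt \<xi> \<omega> k t + L \<le> cnt \<xi> \<omega> a t"
      by blast
    then have "EvP \<xi> A B \<omega>" by (simp add: EvP_def)
    then show False using ev AB(1) by auto
  qed
  have dist_claims: "AE \<omega> in M. \<not> ((\<lambda>t. norm (fst (X \<omega> t) - snd (X \<omega> t))) \<longlonglongrightarrow> 0)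
                    \<and> \<not> ((\<lambda>t. norm (fst (X \<omega> t) - snd (X \<omega> t))) \<longlonglongrightarrow> 2)"
    using noRho
  proof (rule AE_mp, intro AE_I2 impI conjI notI)
    fix \<omega>
    assume nr: "\<not> ((\<lambda>t. rho_P (X \<omega> t)) \<longlonglongrightarrow> 0)"
    {
      assume l0: "(\<lambda>t. norm (fst (X \<omega> t) - snd (X \<omega> t))) \<longlonglongrightarrow> 0"
      have "(\<lambda>t. rho_P (X \<omega> t)) \<longlonglongrightarrow> 0"
      proof (rule Lim_null_comparison)
        show "\<forall>\<^sub>F t in sequentially. norm (rho_P (X \<omega> t)) \<le> norm (fst (X \<omega> t) - snd (X \<omega> t))"
        proof (intro always_eventually allI)
          fix t
          have "rho_P (X \<omega> t) \<le> norm (W2 \<omega> t - 1 *\<^sub>R W1 \<omega> t)" unfolding X by (rule rho_le[OF nW1]) simp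
          moreover have "rho_P (X \<omega> t) \<ge> 0" unfolding rho_P_def by (rule infdist_nonneg)
          ultimately show "norm (rho_P (X \<omega> t)) \<le> norm (fst (X \<omega> t) - snd (X \<omega> t))"
            unfolding X by (simp add: norm_minus_commute)
        qed
      qed (rule l0)
      then show False using nr by simp
    }
    {
      assume l2: "(\<lambda>t. norm (fst (X \<omega> t) - snd (X \<omega> t))) \<longlonglongrightarrow> 2"
      have "(\<lambda>t. sqrt (4 - (norm (fst (X \<omega> t) - snd (X \<omega> t)))\<^sup>2)) \<longlonglongrightarrow> sqrt (4 - 2\<^sup>2)"
        by (intro tendsto_intros l2)
      moreover have "norm (W1 \<omega> t + W2 \<omega> t) = sqrt (4 - (norm (fst (X \<omega> t) - snd (X \<omega> t)))\<^sup>2)" for t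
      proof -
        have "norm (W1 \<omega> t + W2 \<omega> t) = sqrt ((norm (W1 \<omega> t + W2 \<omega> t))\<^sup>2)" by simp
        also have "\<dots> = sqrt (4 - (norm (W1 \<omega> t - W2 \<omega> t))\<^sup>2)" by (simp only: par_unit[OF nW1 nW2])
        finally show ?thesis unfolding X by simp
      qed
      ultimately have lp: "(\<lambda>t. norm (W1 \<omega> t + W2 \<omega> t)) \<longlonglongrightarrow> 0" by simp
      have "(\<lambda>t. rho_P (X \<omega> t)) \<longlonglongrightarrow> 0"
      proof (rule Lim_null_comparison)
        show "\<forall>\<^sub>F t in sequentially. norm (rho_P (X \<omega> t)) \<le> norm (W1 \<omega> t + W2 \<omega> t)"
        proof (intro always_eventually allI)
          fix t
          have "rho_P (X \<omega> t) \<le> norm (W2 \<omega> t - (-1) *\<^sub>R W1 \<omega> t)" unfolding X by (rule rho_le[OF nW1]) simp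
          moreover have "rho_P (X \<omega> t) \<ge> 0" unfolding rho_P_def by (rule infdist_nonneg)
          ultimately show "norm (rho_P (X \<omega> t)) \<le> norm (W1 \<omega> t + W2 \<omega> t)"
            by (simp add: add.commute)
        qed
      qed (rule lp)
      then show False using nr by simp
    }
  qed
  show ?thesis using part1 dist_claims noRho by blast
qed


end
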